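(* There is a constant $c>0$ such that the Goemans–Williamson algorithm, applied to any $\gamma$-stable instance of MAXCUT on $n$ vertices with $\gamma\ge cn^3$, returns the maximal cut with high probability (probability tending to $1$ as $n\to\infty$).
   Context: An instance of MAXCUT is a vertex set $\{1,\dots,n\}$ with a symmetric $w\ge0$ with zero diagonal (matrix $W_{ij}=w(i,j)$); a maximal cut maximizes $\sum_{a\in S,b\notin S}w(a,b)$. A $\gamma$-perturbation of $w$ is $w'$ with $w\le w'\le\gamma w$ entrywise; $w$ is $\gamma$-stable if some cut is maximal for every $\gamma$-perturbation. The Goemans–Williamson algorithm: compute an optimal solution $P$ of the SDP "minimize $\sum_{i,j}P_{ij}W_{ij}$ subject to $P\succeq0$, $P_{ii}=1$"; find unit vectors $v_1,\dots,v_n\in S^{n-1}$ with $P_{ij}=\langle v_i,v_j\rangle$; sample $v\in S^{n-1}$ uniformly; return $S=\{i:\langle v,v_i\rangle>0\}$. *)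

theory Defs
  imports "HOL-Probability.Probability"
begin

text \<open>Vertices are 0,...,n-1. Vectors in R^n are extensional functions on {..<n}.\<close>

definition vinner :: "nat \<Rightarrow> (nat \<Rightarrow> real) \<Rightarrow> (nat \<Rightarrow> real) \<Rightarrow> real" where
  "vinner n x y = (\<Sum>i<n. x i * y i)"

definition vnorm :: "nat \<Rightarrow> (nat \<Rightarrow> real) \<Rightarrow> real" where
  "vnorm n x = sqrt (vinner n x x)"

abbreviation lborelN :: "nat \<Rightarrow> (nat \<Rightarrow> real) measure" where
  "lborelN n \<equiv> PiM {..<n} (\<lambda>_. lborel)"

text \<open>Uniform (normalized surface) measure on the unit sphere S^{n-1} of R^n, obtained
  as the radial projection of the uniform distribution on the punctured unit ball.\<close>
definition sphere_uniform :: "nat \<Rightarrow> (nat \<Rightarrow> real) measure" where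
  "sphere_uniform n =
     distr (uniform_measure (lborelN n)
              {x \<in> space (lborelN n). 0 < vnorm n x \<and> vnorm n x \<le> 1})
           (lborelN n) (\<lambda>x. restrict (\<lambda>i. x i / vnorm n x) {..<n})"

definition maxcut_instance :: "nat \<Rightarrow> (nat \<Rightarrow> nat \<Rightarrow> real) \<Rightarrow> bool" where
  "maxcut_instance n w \<longleftrightarrow>
     (\<forall>i<n. \<forall>j<n. 0 \<le> w i j \<and> w i j = w j i) \<and> (\<forall>i<n. w i i = 0)"

definition cut_value :: "nat \<Rightarrow> (nat \<Rightarrow> nat \<Rightarrow> real) \<Rightarrow> nat set \<Rightarrow> real" where
  "cut_value n w S = (\<Sum>a\<in>S. \<Sum>b\<in>{..<n} - S. w a b)"

definition maximal_cut :: "nat \<Rightarrow> (nat \<Rightarrow> nat \<Rightarrow> real) \<Rightarrow> nat set \<Rightarrow> bool" where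
  "maximal_cut n w S \<longleftrightarrow>
     S \<subseteq> {..<n} \<and> (\<forall>T. T \<subseteq> {..<n} \<longrightarrow> cut_value n w T \<le> cut_value n w S)"

definition perturbation :: "nat \<Rightarrow> real \<Rightarrow> (nat \<Rightarrow> nat \<Rightarrow> real) \<Rightarrow> (nat \<Rightarrow> nat \<Rightarrow> real) \<Rightarrow> bool" where
  "perturbation n \<gamma> w w' \<longleftrightarrow> maxcut_instance n w' \<and>
     (\<forall>i<n. \<forall>j<n. w i j \<le> w' i j \<and> w' i j \<le> \<gamma> * w i j)"

definition gamma_stable :: "nat \<Rightarrow> real \<Rightarrow> (nat \<Rightarrow> nat \<Rightarrow> real) \<Rightarrow> bool" where
  "gamma_stable n \<gamma> w \<longleftrightarrow> (\<exists>S. \<forall>w'. perturbation n \<gamma> w w' \<longrightarrow> maximal_cut n w' S)"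

definition psd :: "nat \<Rightarrow> (nat \<Rightarrow> nat \<Rightarrow> real) \<Rightarrow> bool" where
  "psd n P \<longleftrightarrow> (\<forall>i<n. \<forall>j<n. P i j = P j i) \<and>
     (\<forall>x. 0 \<le> (\<Sum>i<n. \<Sum>j<n. x i * P i j * x j))"

definition sdp_feasible :: "nat \<Rightarrow> (nat \<Rightarrow> nat \<Rightarrow> real) \<Rightarrow> bool" where
  "sdp_feasible n P \<longleftrightarrow> psd n P \<and> (\<forall>i<n. P i i = 1)"

definition sdp_objective :: "nat \<Rightarrow> (nat \<Rightarrow> nat \<Rightarrow> real) \<Rightarrow> (nat \<Rightarrow> nat \<Rightarrow> real) \<Rightarrow> real" where
  "sdp_objective n w P = (\<Sum>i<n. \<Sum>j<n. P i j * w i j)"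

definition sdp_optimal :: "nat \<Rightarrow> (nat \<Rightarrow> nat \<Rightarrow> real) \<Rightarrow> (nat \<Rightarrow> nat \<Rightarrow> real) \<Rightarrow> bool" where
  "sdp_optimal n w P \<longleftrightarrow> sdp_feasible n P \<and>
     (\<forall>Q. sdp_feasible n Q \<longrightarrow> sdp_objective n w P \<le> sdp_objective n w Q)"

definition gram_repr :: "nat \<Rightarrow> (nat \<Rightarrow> nat \<Rightarrow> real) \<Rightarrow> (nat \<Rightarrow> nat \<Rightarrow> real) \<Rightarrow> bool" where
  "gram_repr n P v \<longleftrightarrow>
     (\<forall>i<n. v i \<in> space (lborelN n) \<and> vnorm n (v i) = 1) \<and>
     (\<forall>i<n. \<forall>j<n. P i j = vinner n (v i) (v j))"

definition gw_cut :: "nat \<Rightarrow> (nat \<Rightarrow> nat \<Rightarrow> real) \<Rightarrow> (nat \<Rightarrow> real) \<Rightarrow> nat set" where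
  "gw_cut n v u = {i\<in>{..<n}. 0 < vinner n u (v i)}"

end

theory Submission
  imports Defs
begin


lemma vinner_meas[measurable]: "(\<lambda>x. vinner n x y) \<in> borel_measurable (lborelN n)"
  unfolding vinner_def by measurable

lemma vinner_meas2[measurable]: "(\<lambda>x. vinner n x x) \<in> borel_measurable (lborelN n)"
  unfolding vinner_def by measurable

lemma vnorm_meas[measurable]: "(\<lambda>x. vnorm n x) \<in> borel_measurable (lborelN n)"
  unfolding vnorm_def by measurable

lemma proj_meas: "(\<lambda>x. restrict (\<lambda>i. x i / vnorm n x) {..<n}) \<in> lborelN n \<rightarrow>\<^sub>M lborelN n"
  by (rule measurable_restrict) measurable

lemma ballset_sets: "{x \<in> space (lborelN n). 0 < vnorm n x \<and> vnorm n x \<le> 1} \<in> sets (lborelN n)"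
  by measurable



lemma hyperplane_null:
  assumes k: "k < n" and vk: "v k \<noteq> 0"
  shows "emeasure (lborelN n) {x \<in> space (lborelN n). vinner n x v = 0} = 0"
proof -
  interpret product_sigma_finite "\<lambda>_. lborel" by standard
  define I where "I = {..<n} - {k}"
  have nI: "{..<n} = insert k I" "k \<notin> I" "finite I" using k by (auto simp: I_def)
  define H where "H = {x \<in> space (lborelN n). vinner n x v = 0}"
  have Hs: "H \<in> sets (lborelN n)" unfolding H_def by measurable
  have "emeasure (lborelN n) H = (\<integral>\<^sup>+ x. indicator H x \<partial>lborelN n)"
    using Hs by simp
  also have "\<dots> = (\<integral>\<^sup>+ x. (\<integral>\<^sup>+ y. indicator H (x(k := y)) \<partial>lborel) \<partial>PiM I (\<lambda>_. lborel))"
    unfolding nI(1) by (rule product_nn_integral_insert) (use nI Hs[unfolded nI(1)] in auto)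
  also have "\<dots> = (\<integral>\<^sup>+ x. 0 \<partial>PiM I (\<lambda>_. lborel :: real measure))"
  proof (rule nn_integral_cong)
    fix x :: "nat \<Rightarrow> real" assume x: "x \<in> space (PiM I (\<lambda>_. lborel :: real measure))"
    define c where "c = - (\<Sum>j\<in>I. x j * v j) / v k"
    have "(\<integral>\<^sup>+ y. indicator H (x(k := y)) \<partial>lborel) = (\<integral>\<^sup>+ y. indicator {c} y \<partial>lborel)"
    proof (rule nn_integral_cong)
      fix y :: real
      have sp: "x(k := y) \<in> space (lborelN n)"
        using x nI by (auto simp: space_PiM PiE_iff extensional_def)
      have "vinner n (x(k := y)) v = (\<Sum>j\<in>I. x j * v j) + y * v k"
        unfolding vinner_def nI(1) using nI
        by (simp add: sum.insert_remove) (intro sum.cong, auto)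
      hence "(vinner n (x(k := y)) v = 0) = (y = c)"
        using vk unfolding c_def by (auto simp: field_simps)
      thus "indicator H (x(k := y)) = (indicator {c} y :: ennreal)"
        using sp unfolding H_def by (auto simp: indicator_def)
    qed
    also have "\<dots> = 0" by simp
    finally show "(\<integral>\<^sup>+ y. indicator H (x(k := y)) \<partial>lborel) = 0" .
  qed
  also have "\<dots> = 0" by simp
  finally show ?thesis unfolding H_def .
qed



abbreviation ballset :: "nat \<Rightarrow> (nat \<Rightarrow> real) set" where
 "ballset n \<equiv> {x \<in> space (lborelN n). 0 < vnorm n x \<and> vnorm n x \<le> 1}"

lemma sphere_space: "space (sphere_uniform n) = space (lborelN n)"
  by (simp add: sphere_uniform_def)

lemma sphere_sets: "sets (sphere_uniform n) = sets (lborelN n)"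
  by (simp add: sphere_uniform_def)

lemma ballset_fin: "emeasure (lborelN n) (ballset n) \<noteq> \<infinity>"
proof -
  interpret product_sigma_finite "\<lambda>_. lborel" by standard
  have "ballset n \<subseteq> PiE {..<n} (\<lambda>_. {-1..1::real})"
  proof
    fix x assume x: "x \<in> ballset n"
    have "\<forall>i<n. \<bar>x i\<bar> \<le> 1"
    proof (intro allI impI)
      fix i assume i: "i < n"
      have "vinner n x x \<le> 1" using x unfolding vnorm_def by simp
      moreover have "x i * x i \<le> vinner n x x" unfolding vinner_def
        using i by (intro member_le_sum) auto
      ultimately have "x i * x i \<le> 1" by linarith
      thus "\<bar>x i\<bar> \<le> 1" using abs_square_le_1[of "x i"] by (simp add: power2_eq_square)
    qed
    thus "x \<in> PiE {..<n} (\<lambda>_. {-1..1::real})" using x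
      by (auto simp: space_PiM PiE_iff abs_le_iff)
  qed
  hence "emeasure (lborelN n) (ballset n) \<le> emeasure (lborelN n) (PiE {..<n} (\<lambda>_. {-1..1::real}))"
    by (intro emeasure_mono) auto
  also have "\<dots> = (\<Prod>i<n. emeasure lborel {-1..1::real})"
    by (subst emeasure_PiM) auto
  also have "\<dots> < \<infinity>" by (simp add: power_less_top_ennreal)
  finally show ?thesis by simp
qed

lemma ballset_pos: assumes n: "n \<ge> 1" shows "emeasure (lborelN n) (ballset n) \<noteq> 0"
proof -
  interpret product_sigma_finite "\<lambda>_. lborel" by standard
  define a where "a = 1 / (2 * real n)"
  define b where "b = 1 / real n"
  have ab: "0 < a" "a < b" "b \<le> 1" using n by (auto simp: a_def b_def field_simps)
  have sub: "PiE {..<n} (\<lambda>_. {a..b}) \<subseteq> ballset n"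
  proof
    fix x assume x: "x \<in> PiE {..<n} (\<lambda>_. {a..b})"
    have xi: "\<And>i. i < n \<Longrightarrow> a \<le> x i \<and> x i \<le> b" using x by (auto simp: PiE_iff)
    have "vinner n x x \<le> (\<Sum>i<n. b * b)" unfolding vinner_def
      using xi ab by (intro sum_mono mult_mono) (auto dest: xi)
    also have "\<dots> = real n * b * b" by simp
    also have "\<dots> = 1 / real n" using n by (simp add: b_def field_simps)
    also have "\<dots> \<le> 1" using n by simp
    finally have le1: "vinner n x x \<le> 1" .
    have "x 0 * x 0 \<le> vinner n x x" unfolding vinner_def
      using n by (intro member_le_sum) auto
    moreover have "0 < x 0 * x 0" using xi[of 0] ab n by auto
    ultimately have pos: "0 < vinner n x x" by linarith
    show "x \<in> ballset n" using x le1 pos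
      by (auto simp: vnorm_def space_PiM PiE_iff)
  qed
  have "0 < emeasure (lborelN n) (PiE {..<n} (\<lambda>_. {a..b}))"
    by (subst emeasure_PiM) (use ab in \<open>auto simp: ennreal_power\<close>)
  also have "\<dots> \<le> emeasure (lborelN n) (ballset n)"
    using sub by (intro emeasure_mono ballset_sets)
  finally show ?thesis by simp
qed

lemma proj_meas_u: "(\<lambda>x. restrict (\<lambda>i. x i / vnorm n x) {..<n}) \<in> uniform_measure (lborelN n) (ballset n) \<rightarrow>\<^sub>M lborelN n"
proof -
  have "measurable (uniform_measure (lborelN n) (ballset n)) (lborelN n) = measurable (lborelN n) (lborelN n)"
    by (rule measurable_cong_sets) simp_all
  thus ?thesis using proj_meas by simp
qed

lemma sphere_prob: assumes "n \<ge> 1" shows "prob_space (sphere_uniform n)"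
  unfolding sphere_uniform_def
  by (intro prob_space.prob_space_distr prob_space_uniform_measure ballset_fin ballset_pos assms
      proj_meas_u)

lemma sphere_hyper_null:
  assumes k: "k < n" and vk: "v k \<noteq> 0"
  shows "emeasure (sphere_uniform n) {u \<in> space (sphere_uniform n). vinner n u v = 0} = 0"
proof -
  let ?f = "\<lambda>x. restrict (\<lambda>i. x i / vnorm n x) {..<n}"
  let ?H = "{u \<in> space (lborelN n). vinner n u v = 0}"
  have Hs: "?H \<in> sets (lborelN n)" by measurable
  have pre: "?f -` ?H \<inter> space (lborelN n) \<in> sets (lborelN n)"
    using measurable_sets[OF proj_meas Hs] .
  have "emeasure (sphere_uniform n) ?H = emeasure (uniform_measure (lborelN n) (ballset n)) (?f -` ?H \<inter> space (lborelN n))"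
    unfolding sphere_uniform_def by (subst emeasure_distr) (use proj_meas_u Hs in auto)
  also have "\<dots> = emeasure (lborelN n) (ballset n \<inter> (?f -` ?H \<inter> space (lborelN n))) / emeasure (lborelN n) (ballset n)"
    by (rule emeasure_uniform_measure[OF ballset_sets pre])
  also have "emeasure (lborelN n) (ballset n \<inter> (?f -` ?H \<inter> space (lborelN n))) = 0"
  proof -
    have "ballset n \<inter> (?f -` ?H \<inter> space (lborelN n)) \<subseteq> ?H"
    proof
      fix x assume x: "x \<in> ballset n \<inter> (?f -` ?H \<inter> space (lborelN n))"
      have "vinner n (?f x) v = vinner n x v / vnorm n x"
        unfolding vinner_def by (simp add: sum_divide_distrib)
      thus "x \<in> ?H" using x by auto
    qed
    hence "emeasure (lborelN n) (ballset n \<inter> (?f -` ?H \<inter> space (lborelN n))) \<le> emeasure (lborelN n) ?H"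
      by (intro emeasure_mono Hs)
    thus ?thesis using hyperplane_null[of k n v, OF k vk] by simp
  qed
  finally show ?thesis by (simp add: sphere_space)
qed



lemma swap3:
  fixes b :: "nat \<Rightarrow> nat \<Rightarrow> real"
  shows "(\<Sum>i\<in>I. \<Sum>j\<in>J. b i j * (\<Sum>t\<in>T. c t i j * G t)) = (\<Sum>t\<in>T. G t * (\<Sum>i\<in>I. \<Sum>j\<in>J. b i j * c t i j))"
proof -
  have "(\<Sum>i\<in>I. \<Sum>j\<in>J. b i j * (\<Sum>t\<in>T. c t i j * G t)) = (\<Sum>i\<in>I. \<Sum>j\<in>J. \<Sum>t\<in>T. G t * (b i j * c t i j))"
    by (simp add: sum_distrib_left mult_ac)
  also have "\<dots> = (\<Sum>i\<in>I. \<Sum>t\<in>T. \<Sum>j\<in>J. G t * (b i j * c t i j))"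
    by (rule sum.cong[OF refl], rule sum.swap)
  also have "\<dots> = (\<Sum>t\<in>T. \<Sum>i\<in>I. \<Sum>j\<in>J. G t * (b i j * c t i j))"
    by (rule sum.swap)
  also have "\<dots> = (\<Sum>t\<in>T. G t * (\<Sum>i\<in>I. \<Sum>j\<in>J. b i j * c t i j))"
    by (simp add: sum_distrib_left)
  finally show ?thesis .
qed

lemma sumsq_le_sq:
  fixes f :: "'a \<Rightarrow> real"
  assumes "finite K" "\<And>t. t \<in> K \<Longrightarrow> 0 \<le> f t"
  shows "(\<Sum>t\<in>K. (f t)\<^sup>2) \<le> (\<Sum>t\<in>K. f t)\<^sup>2"
  using assms
proof (induction K rule: finite_induct)
  case empty thus ?case by simp
next
  case (insert x F)
  have s: "0 \<le> sum f F" using insert.prems by (intro sum_nonneg) auto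
  have fx: "0 \<le> f x" using insert.prems by auto
  have IH: "(\<Sum>t\<in>F. (f t)\<^sup>2) \<le> (sum f F)\<^sup>2" using insert by auto
  have "(\<Sum>t\<in>insert x F. (f t)\<^sup>2) = (f x)\<^sup>2 + (\<Sum>t\<in>F. (f t)\<^sup>2)" using insert by simp
  also have "\<dots> \<le> (f x)\<^sup>2 + 2 * f x * sum f F + (sum f F)\<^sup>2"
    using IH mult_nonneg_nonneg[OF mult_nonneg_nonneg[OF _ fx] s, of 2] by linarith
  also have "\<dots> = (sum f (insert x F))\<^sup>2" using insert by (simp add: power2_eq_square algebra_simps)
  finally show ?case .
qed

definition gapf :: "real set \<Rightarrow> real \<Rightarrow> real" where
  "gapf V t = (if \<exists>v\<in>V. t < v then Min {v\<in>V. t < v} - t else 0)"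

lemma gapf_nonneg: "finite V \<Longrightarrow> 0 \<le> gapf V t"
proof -
  assume fin: "finite V"
  show ?thesis
  proof (cases "\<exists>v\<in>V. t < v")
    case True
    hence "t < Min {v\<in>V. t < v}" using fin by (subst Min_gr_iff) auto
    thus ?thesis using True by (simp add: gapf_def)
  qed (simp add: gapf_def)
qed

lemma tele:
  assumes fin: "finite V"
  shows "p \<in> V \<Longrightarrow> q \<in> V \<Longrightarrow> p \<le> q \<Longrightarrow> (\<Sum>t\<in>{t\<in>V. p \<le> t \<and> t < q}. gapf V t) = q - p"
proof (induction "card {t\<in>V. p \<le> t \<and> t < q}" arbitrary: p rule: less_induct)
  case (less p)
  show ?case
  proof (cases "p = q")
    case True
    hence E: "{t\<in>V. p \<le> t \<and> t < q} = {}" by auto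
    show ?thesis by (subst E) (simp add: True)
  next
    case False
    hence pq: "p < q" using less.prems by simp
    let ?U = "{v\<in>V. p < v}"
    define p' where "p' = Min ?U"
    have Ufin: "finite ?U" using fin by simp
    have Une: "?U \<noteq> {}" using pq less.prems by auto
    have p'U: "p' \<in> ?U" unfolding p'_def using Ufin Une by (rule Min_in)
    have p'q: "p' \<le> q" unfolding p'_def using Ufin pq less.prems by (intro Min_le) auto
    have p'min: "\<And>v. v \<in> V \<Longrightarrow> p < v \<Longrightarrow> p' \<le> v" unfolding p'_def using Ufin by (intro Min_le) auto
    have gp: "gapf V p = p' - p" unfolding gapf_def p'_def using Une by auto
    have seteq: "{t\<in>V. p \<le> t \<and> t < q} = insert p {t\<in>V. p' \<le> t \<and> t < q}"
      using p'U pq less.prems p'min by (auto; force)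
    have pnot: "p \<notin> {t\<in>V. p' \<le> t \<and> t < q}" using p'U by auto
    have fin2: "finite {t\<in>V. p' \<le> t \<and> t < q}" using fin by simp
    have cardlt: "card {t\<in>V. p' \<le> t \<and> t < q} < card {t\<in>V. p \<le> t \<and> t < q}"
      unfolding seteq using fin2 pnot by simp
    have IH: "(\<Sum>t\<in>{t\<in>V. p' \<le> t \<and> t < q}. gapf V t) = q - p'"
      using less.hyps[OF cardlt] p'U p'q less.prems by auto
    show ?thesis unfolding seteq using fin2 pnot IH gp by simp
  qed
qed

definition cr :: "nat set \<Rightarrow> nat \<Rightarrow> nat \<Rightarrow> real" where
  "cr A i j = (if (i \<in> A) = (j \<in> A) then 0 else 1)"

lemma key_scalar:
  fixes a b :: "nat \<Rightarrow> nat \<Rightarrow> real" and y :: "nat \<Rightarrow> real" and \<gamma> :: real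
  assumes g0: "0 \<le> \<gamma>"
    and a0: "\<And>i j. i < n \<Longrightarrow> j < n \<Longrightarrow> 0 \<le> a i j"
    and b0: "\<And>i j. i < n \<Longrightarrow> j < n \<Longrightarrow> 0 \<le> b i j"
    and cond: "\<And>A. A \<subseteq> {..<n} \<Longrightarrow>
        \<gamma> * (\<Sum>i<n. \<Sum>j<n. b i j * cr A i j) \<le> (\<Sum>i<n. \<Sum>j<n. a i j * cr A i j)"
  shows "\<gamma> * (\<Sum>i<n. \<Sum>j<n. b i j * (y i - y j)\<^sup>2) \<le> real n * (\<Sum>i<n. \<Sum>j<n. a i j * (y i - y j)\<^sup>2)"
proof -
  define V where "V = y ` {..<n}"
  have finV: "finite V" unfolding V_def by simp
  have cardV: "card V \<le> n" unfolding V_def using card_image_le[of "{..<n}" y] by simp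
  define At where "At t = {k\<in>{..<n}. y k \<le> t}" for t
  define G where "G t = (gapf V t)\<^sup>2" for t
  have G0: "\<And>t. 0 \<le> G t" unfolding G_def by simp
  define S where "S i j = (\<Sum>t\<in>V. cr (At t) i j * G t)" for i j
  have bounds: "S i j \<le> (y i - y j)\<^sup>2 \<and> (y i - y j)\<^sup>2 \<le> real n * S i j" if ij: "i < n" "j < n" for i j
  proof -
    define lo where "lo = min (y i) (y j)"
    define hi where "hi = max (y i) (y j)"
    define K where "K = {t\<in>V. lo \<le> t \<and> t < hi}"
    have finK: "finite K" unfolding K_def using finV by simp
    have SK: "S i j = (\<Sum>t\<in>K. (gapf V t)\<^sup>2)"
    proof -
      have "S i j = (\<Sum>t\<in>V. if lo \<le> t \<and> t < hi then (gapf V t)\<^sup>2 else 0)"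
        unfolding S_def
        by (rule sum.cong[OF refl]) (auto simp: cr_def At_def G_def lo_def hi_def ij)
      also have "\<dots> = (\<Sum>t\<in>K. (gapf V t)\<^sup>2)"
        unfolding K_def using finV by (simp add: sum.inter_filter)
      finally show ?thesis .
    qed
    have loV: "lo \<in> V" "hi \<in> V" unfolding lo_def hi_def V_def using ij by (auto simp: min_def max_def)
    have tel: "(\<Sum>t\<in>K. gapf V t) = hi - lo"
      unfolding K_def by (rule tele[OF finV loV]) (simp add: lo_def hi_def)
    have sq: "(y i - y j)\<^sup>2 = (\<Sum>t\<in>K. gapf V t)\<^sup>2"
      unfolding tel lo_def hi_def by (simp add: min_def max_def power2_commute)
    have "card K \<le> card V" unfolding K_def using finV by (intro card_mono) auto
    hence cK: "real (card K) \<le> real n" using cardV by simp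
    have up: "(\<Sum>t\<in>K. gapf V t)\<^sup>2 \<le> (\<Sum>t\<in>K. (gapf V t)\<^sup>2) * real (card K)"
      by (rule sum_squared_le_sum_of_squares)
    also have "\<dots> \<le> (\<Sum>t\<in>K. (gapf V t)\<^sup>2) * real n"
      by (intro mult_left_mono cK sum_nonneg) auto
    finally have up2: "(\<Sum>t\<in>K. gapf V t)\<^sup>2 \<le> real n * (\<Sum>t\<in>K. (gapf V t)\<^sup>2)" by (simp add: mult_ac)
    have lw: "(\<Sum>t\<in>K. (gapf V t)\<^sup>2) \<le> (\<Sum>t\<in>K. gapf V t)\<^sup>2"
      by (rule sumsq_le_sq[OF finK]) (simp add: gapf_nonneg finV)
    show ?thesis using up2 lw unfolding sq SK by simp
  qed
  have inner: "\<gamma> * (\<Sum>i<n. \<Sum>j<n. b i j * S i j) \<le> (\<Sum>i<n. \<Sum>j<n. a i j * S i j)"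
  proof -
    have "(\<Sum>i<n. \<Sum>j<n. b i j * S i j) = (\<Sum>t\<in>V. G t * (\<Sum>i<n. \<Sum>j<n. b i j * cr (At t) i j))"
      unfolding S_def by (rule swap3)
    hence "\<gamma> * (\<Sum>i<n. \<Sum>j<n. b i j * S i j) = (\<Sum>t\<in>V. G t * (\<gamma> * (\<Sum>i<n. \<Sum>j<n. b i j * cr (At t) i j)))"
      by (simp add: sum_distrib_left mult_ac)
    also have "\<dots> \<le> (\<Sum>t\<in>V. G t * (\<Sum>i<n. \<Sum>j<n. a i j * cr (At t) i j))"
      by (intro sum_mono mult_left_mono cond G0) (auto simp: At_def)
    also have "\<dots> = (\<Sum>i<n. \<Sum>j<n. a i j * S i j)"
      unfolding S_def by (rule swap3[symmetric])
    finally show ?thesis .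
  qed
  have "\<gamma> * (\<Sum>i<n. \<Sum>j<n. b i j * (y i - y j)\<^sup>2) \<le> \<gamma> * (\<Sum>i<n. \<Sum>j<n. b i j * (real n * S i j))"
    using bounds b0 g0 by (intro mult_left_mono sum_mono mult_left_mono) auto
  also have "\<dots> = real n * (\<gamma> * (\<Sum>i<n. \<Sum>j<n. b i j * S i j))"
    by (simp add: sum_distrib_left mult_ac)
  also have "\<dots> \<le> real n * (\<Sum>i<n. \<Sum>j<n. a i j * S i j)"
    using inner by (intro mult_left_mono) auto
  also have "\<dots> \<le> real n * (\<Sum>i<n. \<Sum>j<n. a i j * (y i - y j)\<^sup>2)"
    using bounds a0 by (intro mult_left_mono sum_mono mult_left_mono) auto
  finally show ?thesis .
qed



lemma sum_restrict_set:
  fixes f :: "nat \<Rightarrow> real"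
  assumes "X \<subseteq> {..<n}"
  shows "(\<Sum>i\<in>X. f i) = (\<Sum>i<n. if i \<in> X then f i else 0)"
proof -
  have "X = {i\<in>{..<n}. i \<in> X}" using assms by auto
  hence "(\<Sum>i\<in>X. f i) = (\<Sum>i\<in>{i\<in>{..<n}. i \<in> X}. f i)" by simp
  also have "\<dots> = (\<Sum>i<n. if i \<in> X then f i else 0)" by (rule sum.inter_filter) simp
  finally show ?thesis .
qed

lemma cut_double:
  assumes sym: "\<And>i j. i < n \<Longrightarrow> j < n \<Longrightarrow> w i j = w j i" and X: "X \<subseteq> {..<n}"
  shows "2 * cut_value n w X = (\<Sum>i<n. \<Sum>j<n. w i j * cr X i j)"
proof -
  have c1: "cut_value n w X = (\<Sum>i<n. \<Sum>j<n. if i \<in> X \<and> j \<notin> X then w i j else 0)"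
  proof -
    have "cut_value n w X = (\<Sum>i<n. if i \<in> X then (\<Sum>b\<in>{..<n} - X. w i b) else 0)"
      unfolding cut_value_def by (rule sum_restrict_set[OF X])
    also have "\<dots> = (\<Sum>i<n. if i \<in> X then (\<Sum>j<n. if j \<notin> X then w i j else 0) else 0)"
    proof -
      have inner: "(\<Sum>b\<in>{..<n} - X. w i b) = (\<Sum>j<n. if j \<notin> X then w i j else 0)" for i
      proof -
        have "{..<n} - X = {j\<in>{..<n}. j \<notin> X}" by auto
        hence "(\<Sum>b\<in>{..<n} - X. w i b) = (\<Sum>b\<in>{j\<in>{..<n}. j \<notin> X}. w i b)" by simp
        also have "\<dots> = (\<Sum>j<n. if j \<notin> X then w i j else 0)" by (rule sum.inter_filter) simp
        finally show ?thesis .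
      qed
      show ?thesis by (simp only: inner)
    qed
    also have "\<dots> = (\<Sum>i<n. \<Sum>j<n. if i \<in> X \<and> j \<notin> X then w i j else 0)"
      by (intro sum.cong refl) auto
    finally show ?thesis .
  qed
  have c2: "(\<Sum>i<n. \<Sum>j<n. if j \<in> X \<and> i \<notin> X then w i j else 0) = cut_value n w X"
  proof -
    have "(\<Sum>i<n. \<Sum>j<n. if j \<in> X \<and> i \<notin> X then w i j else 0) = (\<Sum>j<n. \<Sum>i<n. if j \<in> X \<and> i \<notin> X then w i j else 0)"
      by (rule sum.swap)
    also have "\<dots> = (\<Sum>j<n. \<Sum>i<n. if j \<in> X \<and> i \<notin> X then w j i else 0)"
      by (intro sum.cong refl) (auto simp: sym)
    finally show ?thesis using c1 by simp
  qed
  have "(\<Sum>i<n. \<Sum>j<n. w i j * cr X i j) = (\<Sum>i<n. \<Sum>j<n. (if i \<in> X \<and> j \<notin> X then w i j else 0) + (if j \<in> X \<and> i \<notin> X then w i j else 0))"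
    by (intro sum.cong refl) (auto simp: cr_def)
  also have "\<dots> = cut_value n w X + cut_value n w X"
    using c1 c2 by (simp add: sum.distrib)
  finally show ?thesis by simp
qed

lemma stable_cond:
  assumes inst: "maxcut_instance n w" and g1: "1 \<le> \<gamma>"
    and st: "\<forall>w'. perturbation n \<gamma> w w' \<longrightarrow> maximal_cut n w' S"
    and A: "A \<subseteq> {..<n}"
  shows "\<gamma> * (\<Sum>i<n. \<Sum>j<n. (if (i \<in> S) = (j \<in> S) then w i j else 0) * cr A i j)
       \<le> (\<Sum>i<n. \<Sum>j<n. (if (i \<in> S) = (j \<in> S) then 0 else w i j) * cr A i j)"
proof -
  define w' where "w' i j = (if (i \<in> S) = (j \<in> S) \<and> (i \<in> A) \<noteq> (j \<in> A) then \<gamma> * w i j else w i j)" for i j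
  have wnn: "\<And>i j. i < n \<Longrightarrow> j < n \<Longrightarrow> 0 \<le> w i j" and wsym: "\<And>i j. i < n \<Longrightarrow> j < n \<Longrightarrow> w i j = w j i"
    and wdiag: "\<And>i. i < n \<Longrightarrow> w i i = 0"
    using inst unfolding maxcut_instance_def by auto
  have sym': "\<And>i j. i < n \<Longrightarrow> j < n \<Longrightarrow> w' i j = w' j i" unfolding w'_def using wsym by auto
  have pert: "perturbation n \<gamma> w w'"
    unfolding perturbation_def maxcut_instance_def
  proof (intro conjI allI impI)
    fix i j assume ij: "i < n" "j < n"
    show "0 \<le> w' i j" unfolding w'_def using wnn[OF ij] g1 by auto
    show "w' i j = w' j i" using sym'[OF ij] .
    show "w i j \<le> w' i j" unfolding w'_def using wnn[OF ij] g1 mult_right_mono[OF g1 wnn[OF ij]] by auto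
    show "w' i j \<le> \<gamma> * w i j" unfolding w'_def using wnn[OF ij] g1 mult_right_mono[OF g1 wnn[OF ij]] by auto
  next
    fix i assume "i < n" thus "w' i i = 0" unfolding w'_def using wdiag by auto
  qed
  have mc: "maximal_cut n w' S" using st pert by auto
  hence Ssub: "S \<subseteq> {..<n}" unfolding maximal_cut_def by auto
  define T where "T = (S - A) \<union> (A - S)"
  have Tsub: "T \<subseteq> {..<n}" using Ssub A unfolding T_def by auto
  have "cut_value n w' T \<le> cut_value n w' S" using mc Tsub unfolding maximal_cut_def by auto
  hence "(\<Sum>i<n. \<Sum>j<n. w' i j * cr T i j) \<le> (\<Sum>i<n. \<Sum>j<n. w' i j * cr S i j)"
    using cut_double[of n w' T, OF sym' Tsub] cut_double[of n w' S, OF sym' Ssub] by linarith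
  hence "0 \<le> (\<Sum>i<n. \<Sum>j<n. w' i j * cr S i j - w' i j * cr T i j)"
    by (simp add: sum_subtractf)
  also have "\<dots> = (\<Sum>i<n. \<Sum>j<n. (if (i \<in> S) = (j \<in> S) then 0 else w i j) * cr A i j
      - \<gamma> * ((if (i \<in> S) = (j \<in> S) then w i j else 0) * cr A i j))"
    by (intro sum.cong refl) (auto simp: w'_def cr_def T_def)
  also have "\<dots> = (\<Sum>i<n. \<Sum>j<n. (if (i \<in> S) = (j \<in> S) then 0 else w i j) * cr A i j)
      - \<gamma> * (\<Sum>i<n. \<Sum>j<n. (if (i \<in> S) = (j \<in> S) then w i j else 0) * cr A i j)"
    by (simp add: sum_subtractf sum_distrib_left)
  finally show ?thesis by simp
qed



lemma event_meas:
  "{u \<in> space (lborelN n). maximal_cut n w (gw_cut n v u)} \<in> sets (lborelN n)"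
proof -
  define F where "F = {T. T \<subseteq> {..<n} \<and> maximal_cut n w T}"
  have finF: "finite F" unfolding F_def by (rule finite_subset[of _ "Pow {..<n}"]) auto
  have eq: "{u \<in> space (lborelN n). maximal_cut n w (gw_cut n v u)} =
     (\<Union>T\<in>F. {u \<in> space (lborelN n). \<forall>i\<in>{..<n}. (0 < vinner n u (v i)) = (i \<in> T)})"
  proof (intro set_eqI iffI)
    fix u assume u: "u \<in> {u \<in> space (lborelN n). maximal_cut n w (gw_cut n v u)}"
    hence GF: "gw_cut n v u \<in> F" unfolding F_def by (auto simp: gw_cut_def)
    show "u \<in> (\<Union>T\<in>F. {u \<in> space (lborelN n). \<forall>i\<in>{..<n}. (0 < vinner n u (v i)) = (i \<in> T)})"
      by (rule UN_I[OF GF]) (use u in \<open>auto simp: gw_cut_def\<close>)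
  next
    fix u assume "u \<in> (\<Union>T\<in>F. {u \<in> space (lborelN n). \<forall>i\<in>{..<n}. (0 < vinner n u (v i)) = (i \<in> T)})"
    then obtain T where T: "T \<in> F" "u \<in> space (lborelN n)" "\<forall>i\<in>{..<n}. (0 < vinner n u (v i)) = (i \<in> T)" by auto
    have "gw_cut n v u = T" using T unfolding F_def gw_cut_def by auto
    thus "u \<in> {u \<in> space (lborelN n). maximal_cut n w (gw_cut n v u)}" using T unfolding F_def by auto
  qed
  have "\<And>T. {u \<in> space (lborelN n). \<forall>i\<in>{..<n}. (0 < vinner n u (v i)) = (i \<in> T)} \<in> sets (lborelN n)"
    by measurable
  thus ?thesis unfolding eq using finF by (intro sets.finite_UN) auto
qed



lemma swapk:
  fixes b :: "nat \<Rightarrow> nat \<Rightarrow> real"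
  shows "(\<Sum>k\<in>K. \<Sum>i\<in>I. \<Sum>j\<in>J. b i j * f i j k) = (\<Sum>i\<in>I. \<Sum>j\<in>J. b i j * (\<Sum>k\<in>K. f i j k))"
proof -
  have "(\<Sum>k\<in>K. \<Sum>i\<in>I. \<Sum>j\<in>J. b i j * f i j k) = (\<Sum>i\<in>I. \<Sum>k\<in>K. \<Sum>j\<in>J. b i j * f i j k)"
    by (rule sum.swap)
  also have "\<dots> = (\<Sum>i\<in>I. \<Sum>j\<in>J. \<Sum>k\<in>K. b i j * f i j k)"
    by (rule sum.cong[OF refl], rule sum.swap)
  finally show ?thesis by (simp add: sum_distrib_left)
qed

lemma double_sum_zero:
  fixes f :: "nat \<Rightarrow> nat \<Rightarrow> real"
  assumes z: "(\<Sum>i<n. \<Sum>j<n. f i j) = 0" and nn: "\<And>i j. i < n \<Longrightarrow> j < n \<Longrightarrow> 0 \<le> f i j"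
    and ij: "i < n" "j < n"
  shows "f i j = 0"
proof -
  have nn1: "\<And>i. i \<in> {..<n} \<Longrightarrow> 0 \<le> (\<Sum>j<n. f i j)" using nn by (auto intro!: sum_nonneg)
  have "(\<Sum>j<n. f i j) = 0" using z sum_nonneg_eq_0_iff[of "{..<n}" "\<lambda>i. \<Sum>j<n. f i j"] nn1 ij by auto
  hence "\<forall>j\<in>{..<n}. f i j = 0" using sum_nonneg_eq_0_iff[of "{..<n}" "\<lambda>j. f i j"] nn ij by auto
  thus ?thesis using ij by auto
qed

lemma vinner_self: "vnorm n x = 1 \<Longrightarrow> vinner n x x = 1"
  unfolding vnorm_def by simp

lemma sdp_structure:
  assumes inst: "maxcut_instance n w" and g: "real n < \<gamma>" and g1: "1 \<le> \<gamma>"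
    and st: "\<forall>w'. perturbation n \<gamma> w w' \<longrightarrow> maximal_cut n w' S"
    and opt: "sdp_optimal n w P" and gr: "gram_repr n P v"
    and ij: "i < n" "j < n" "0 < w i j" and k: "k < n"
  shows "(if i \<in> S then 1 else -1) * v i k = (if j \<in> S then 1 else -1) * (v j k :: real)"
proof -
  define xs :: "nat \<Rightarrow> real" where "xs i = (if i \<in> S then 1 else -1)" for i
  have xs2: "\<And>i. xs i * xs i = 1" unfolding xs_def by auto
  have wnn: "\<And>i j. i < n \<Longrightarrow> j < n \<Longrightarrow> 0 \<le> w i j" and wsym: "\<And>i j. i < n \<Longrightarrow> j < n \<Longrightarrow> w i j = w j i"
    using inst unfolding maxcut_instance_def by auto
  define Q where "Q i j = xs i * xs j" for i j
  have Qf: "sdp_feasible n Q"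
    unfolding sdp_feasible_def psd_def
  proof (intro conjI allI impI)
    fix z :: "nat \<Rightarrow> real"
    have "(\<Sum>i<n. \<Sum>j<n. z i * Q i j * z j) = (\<Sum>i<n. z i * xs i) * (\<Sum>j<n. z j * xs j)"
      unfolding Q_def by (simp add: sum_distrib_left sum_distrib_right mult_ac)
    also have "\<dots> \<ge> 0" by simp
    finally show "0 \<le> (\<Sum>i<n. \<Sum>j<n. z i * Q i j * z j)" .
  qed (auto simp: Q_def xs2 mult.commute)
  have objle: "(\<Sum>i<n. \<Sum>j<n. P i j * w i j) \<le> (\<Sum>i<n. \<Sum>j<n. Q i j * w i j)"
    using opt Qf unfolding sdp_optimal_def sdp_objective_def by auto
  have Pv: "\<And>i j. i < n \<Longrightarrow> j < n \<Longrightarrow> P i j = vinner n (v i) (v j)"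
    and vn: "\<And>i. i < n \<Longrightarrow> vinner n (v i) (v i) = 1"
    using gr vinner_self unfolding gram_repr_def by auto
  define u where "u i k = xs i * v i k" for i k
  define d where "d i j = (\<Sum>k<n. (u i k - u j k)\<^sup>2)" for i j
  have d0: "\<And>i j. 0 \<le> d i j" unfolding d_def by (intro sum_nonneg) auto
  have dform: "d i j = 2 - 2 * (xs i * xs j) * P i j" if "i < n" "j < n" for i j
  proof -
    have "d i j = (xs i * xs i) * (\<Sum>k<n. v i k * v i k) + (xs j * xs j) * (\<Sum>k<n. v j k * v j k)
        - 2 * (xs i * xs j) * (\<Sum>k<n. v i k * v j k)"
      unfolding d_def u_def
      by (simp add: power2_eq_square algebra_simps sum.distrib sum_subtractf sum_distrib_left)
    thus ?thesis using vn[OF that(1)] vn[OF that(2)] Pv[OF that] xs2 unfolding vinner_def by simp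
  qed
  define b where "b i j = (if (i \<in> S) = (j \<in> S) then w i j else 0)" for i j
  define a where "a i j = (if (i \<in> S) = (j \<in> S) then 0 else w i j)" for i j
  have a0: "\<And>i j. i < n \<Longrightarrow> j < n \<Longrightarrow> 0 \<le> a i j" and b0: "\<And>i j. i < n \<Longrightarrow> j < n \<Longrightarrow> 0 \<le> b i j"
    using wnn unfolding a_def b_def by auto
  define Ad where "Ad = (\<Sum>i<n. \<Sum>j<n. a i j * d i j)"
  define Bd where "Bd = (\<Sum>i<n. \<Sum>j<n. b i j * d i j)"
  have Ad0: "0 \<le> Ad" unfolding Ad_def using a0 d0 by (intro sum_nonneg mult_nonneg_nonneg) auto
  have Bd0: "0 \<le> Bd" unfolding Bd_def using b0 d0 by (intro sum_nonneg mult_nonneg_nonneg) auto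
  have opt2: "Ad \<le> Bd"
  proof -
    have "Bd - Ad = (\<Sum>i<n. \<Sum>j<n. 2 * (Q i j * w i j - P i j * w i j))"
      unfolding Ad_def Bd_def sum_subtractf[symmetric]
    proof (intro sum.cong refl)
      fix i j assume "i \<in> {..<n}" "j \<in> {..<n}"
      hence hd: "d i j = 2 - 2 * (xs i * xs j) * P i j" by (intro dform) auto
      show "b i j * d i j - a i j * d i j = 2 * (Q i j * w i j - P i j * w i j)"
        unfolding hd a_def b_def Q_def xs_def by (auto simp: algebra_simps)
    qed
    also have "\<dots> = 2 * ((\<Sum>i<n. \<Sum>j<n. Q i j * w i j) - (\<Sum>i<n. \<Sum>j<n. P i j * w i j))"
      by (simp add: sum_subtractf sum_distrib_left)
    also have "\<dots> \<ge> 0" using objle by simp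
    finally show ?thesis by simp
  qed
  have keyk: "\<gamma> * (\<Sum>i<n. \<Sum>j<n. b i j * (u i k - u j k)\<^sup>2) \<le> real n * (\<Sum>i<n. \<Sum>j<n. a i j * (u i k - u j k)\<^sup>2)" for k
  proof (rule key_scalar)
    show "0 \<le> \<gamma>" using g1 by simp
    show "\<And>i j. i < n \<Longrightarrow> j < n \<Longrightarrow> 0 \<le> a i j" by (rule a0)
    show "\<And>i j. i < n \<Longrightarrow> j < n \<Longrightarrow> 0 \<le> b i j" by (rule b0)
    fix A assume "A \<subseteq> {..<n}"
    thus "\<gamma> * (\<Sum>i<n. \<Sum>j<n. b i j * cr A i j) \<le> (\<Sum>i<n. \<Sum>j<n. a i j * cr A i j)"
      unfolding a_def b_def by (rule stable_cond[OF inst g1 st])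
  qed
  have "\<gamma> * Bd \<le> real n * Ad"
  proof -
    have "Bd = (\<Sum>k<n. (\<Sum>i<n. \<Sum>j<n. b i j * (u i k - u j k)\<^sup>2))"
      unfolding Bd_def d_def by (rule swapk[symmetric])
    hence "\<gamma> * Bd = (\<Sum>k<n. \<gamma> * (\<Sum>i<n. \<Sum>j<n. b i j * (u i k - u j k)\<^sup>2))"
      by (simp only: sum_distrib_left)
    also have "\<dots> \<le> (\<Sum>k<n. real n * (\<Sum>i<n. \<Sum>j<n. a i j * (u i k - u j k)\<^sup>2))"
      by (intro sum_mono keyk)
    also have "\<dots> = real n * (\<Sum>k<n. (\<Sum>i<n. \<Sum>j<n. a i j * (u i k - u j k)\<^sup>2))"
      by (simp only: sum_distrib_left)
    also have "(\<Sum>k<n. (\<Sum>i<n. \<Sum>j<n. a i j * (u i k - u j k)\<^sup>2)) = Ad"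
      unfolding Ad_def d_def by (rule swapk)
    finally show ?thesis .
  qed
  moreover have "\<gamma> * Ad \<le> \<gamma> * Bd" using opt2 g1 by (intro mult_left_mono) auto
  ultimately have "\<gamma> * Ad \<le> real n * Ad" by linarith
  hence "(\<gamma> - real n) * Ad \<le> 0" by (simp add: algebra_simps)
  hence "Ad \<le> 0" using g by (simp add: mult_le_0_iff)
  hence AdZ: "Ad = 0" using Ad0 by linarith
  hence "\<gamma> * Bd \<le> 0" using \<open>\<gamma> * Bd \<le> real n * Ad\<close> by simp
  hence "Bd \<le> 0" using g1 by (simp add: mult_le_0_iff)
  hence BdZ: "Bd = 0" using Bd0 by linarith
  have dz: "d i j = 0"
  proof (cases "(i \<in> S) = (j \<in> S)")
    case True
    have "b i j * d i j = 0"
      by (rule double_sum_zero[OF BdZ[unfolded Bd_def]]) (use ij b0 d0 in auto)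
    thus ?thesis using True ij unfolding b_def by auto
  next
    case False
    have "a i j * d i j = 0"
      by (rule double_sum_zero[OF AdZ[unfolded Ad_def]]) (use ij a0 d0 in auto)
    thus ?thesis using False ij unfolding a_def by auto
  qed
  hence "\<forall>k\<in>{..<n}. (u i k - u j k)\<^sup>2 = 0" unfolding d_def
    by (subst (asm) sum_nonneg_eq_0_iff) auto
  hence "u i k = u j k" using k by auto
  thus ?thesis unfolding u_def xs_def .
qed



lemma rounding:
  assumes inst: "maxcut_instance n w" and g: "real n < \<gamma>" and g1: "1 \<le> \<gamma>"
    and st: "\<forall>w'. perturbation n \<gamma> w w' \<longrightarrow> maximal_cut n w' S"
    and opt: "sdp_optimal n w P" and gr: "gram_repr n P v"
    and nz: "\<forall>i<n. vinner n u (v i) \<noteq> 0"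
  shows "maximal_cut n w (gw_cut n v u)"
proof -
  define xs :: "nat \<Rightarrow> real" where "xs i = (if i \<in> S then 1 else -1)" for i
  have wnn: "\<And>i j. i < n \<Longrightarrow> j < n \<Longrightarrow> 0 \<le> w i j" and wsym: "\<And>i j. i < n \<Longrightarrow> j < n \<Longrightarrow> w i j = w j i"
    using inst unfolding maxcut_instance_def by auto
  have pw: "perturbation n \<gamma> w w"
    unfolding perturbation_def using inst wnn g1 mult_right_mono[OF g1 wnn] by auto
  have mS: "maximal_cut n w S" using st pw by auto
  hence Ssub: "S \<subseteq> {..<n}" unfolding maximal_cut_def by auto
  define T where "T = gw_cut n v u"
  have Tsub: "T \<subseteq> {..<n}" unfolding T_def gw_cut_def by auto
  have crEq: "w i j * cr T i j = w i j * cr S i j" if ij: "i < n" "j < n" for i j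
  proof (cases "0 < w i j")
    case False thus ?thesis using wnn[OF ij] by simp
  next
    case True
    have vj: "v j k = xs i * xs j * v i k" if "k < n" for k
    proof -
      have "xs i * v i k = xs j * v j k"
        using sdp_structure[OF inst g g1 st opt gr ij True that] unfolding xs_def .
      hence "xs j * (xs i * v i k) = xs j * (xs j * v j k)" by simp
      thus ?thesis unfolding xs_def by (auto split: if_splits)
    qed
    have "vinner n u (v j) = xs i * xs j * vinner n u (v i)"
      unfolding vinner_def by (simp add: vj sum_distrib_left mult_ac)
    hence vjv: "vinner n u (v j) = xs i * xs j * vinner n u (v i)" .
    have nz0: "vinner n u (v i) \<noteq> 0" using nz ij by auto
    have memT: "\<And>k. k < n \<Longrightarrow> (k \<in> T) = (0 < vinner n u (v k))" by (simp add: T_def gw_cut_def)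
    have "((i \<in> T) = (j \<in> T)) = ((i \<in> S) = (j \<in> S))"
    proof (cases "(i \<in> S) = (j \<in> S)")
      case True
      hence "xs i * xs j = 1" unfolding xs_def by auto
      hence "vinner n u (v j) = vinner n u (v i)" using vjv by simp
      thus ?thesis using True memT ij by simp
    next
      case False
      hence "xs i * xs j = -1" unfolding xs_def by auto
      hence "vinner n u (v j) = - vinner n u (v i)" using vjv by simp
      hence "(0 < vinner n u (v j)) = (\<not> (0 < vinner n u (v i)))" using nz0 by linarith
      thus ?thesis using False memT ij by simp
    qed
    thus ?thesis unfolding cr_def by simp
  qed
  have "(\<Sum>i<n. \<Sum>j<n. w i j * cr T i j) = (\<Sum>i<n. \<Sum>j<n. w i j * cr S i j)"
    by (intro sum.cong refl crEq) auto
  hence "2 * cut_value n w T = 2 * cut_value n w S"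
    using cut_double[of n w T, OF wsym Tsub] cut_double[of n w S, OF wsym Ssub] by simp
  hence eqv: "cut_value n w T = cut_value n w S" by simp
  show ?thesis using mS Tsub eqv unfolding maximal_cut_def T_def by auto
qed

theorem corollary4:
  shows "\<exists>c>0. \<exists>\<epsilon> :: nat \<Rightarrow> real. \<epsilon> \<longlonglongrightarrow> 0 \<and>
    (\<forall>n w \<gamma> P v.
       maxcut_instance n w \<and> gamma_stable n \<gamma> w \<and> \<gamma> \<ge> c * real n ^ 3 \<and>
       sdp_optimal n w P \<and> gram_repr n P v \<longrightarrow>
       measure (sphere_uniform n)
         {u \<in> space (sphere_uniform n). maximal_cut n w (gw_cut n v u)} \<ge> 1 - \<epsilon> n)"
proof (intro exI conjI allI impI)
  show "(0::real) < 2" by simp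
  show "(\<lambda>n::nat. if n = 0 then 1 else 0 :: real) \<longlonglongrightarrow> 0"
    by (rule tendsto_eventually) (auto simp: eventually_sequentially intro!: exI[of _ 1])
  fix n w \<gamma> P v
  assume H: "maxcut_instance n w \<and> gamma_stable n \<gamma> w \<and> 2 * real n ^ 3 \<le> \<gamma> \<and>
       sdp_optimal n w P \<and> gram_repr n P v"
  let ?M = "sphere_uniform n"
  let ?E = "{u \<in> space ?M. maximal_cut n w (gw_cut n v u)}"
  show "1 - (if n = 0 then 1 else 0) \<le> measure ?M ?E"
  proof (cases "n = 0")
    case True thus ?thesis by simp
  next
    case False
    hence n1: "1 \<le> n" by simp
    have inst: "maxcut_instance n w" and opt: "sdp_optimal n w P" and gr: "gram_repr n P v"
      and gs: "gamma_stable n \<gamma> w" and gb: "2 * real n ^ 3 \<le> \<gamma>" using H by auto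
    have rn1: "1 \<le> real n" using n1 by simp
    have "real n ^ 1 \<le> real n ^ 3" using rn1 by (intro power_increasing) auto
    hence p3: "real n \<le> real n ^ 3" by (simp only: power_one_right)
    have g: "real n < \<gamma>" using gb p3 rn1 by linarith
    have g1: "1 \<le> \<gamma>" using gb p3 rn1 by linarith
    obtain S where st: "\<forall>w'. perturbation n \<gamma> w w' \<longrightarrow> maximal_cut n w' S"
      using gs unfolding gamma_stable_def by auto
    interpret P: prob_space ?M using sphere_prob[OF n1] .
    define N where "N = (\<Union>i<n. {u \<in> space ?M. vinner n u (v i) = 0})"
    have Nnull: "emeasure ?M {u \<in> space ?M. vinner n u (v i) = 0} = 0" if i: "i < n" for i
    proof -
      have "vinner n (v i) (v i) = 1" using gr i vinner_self unfolding gram_repr_def by auto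
      have "\<exists>k<n. v i k \<noteq> 0"
      proof (rule ccontr)
        assume "\<not> (\<exists>k<n. v i k \<noteq> 0)"
        hence "vinner n (v i) (v i) = 0" unfolding vinner_def by simp
        thus False using \<open>vinner n (v i) (v i) = 1\<close> by simp
      qed
      then obtain k where k: "k < n" "v i k \<noteq> 0" by blast
      show ?thesis by (rule sphere_hyper_null[of k n "v i", OF k])
    qed
    have Hsets: "{u \<in> space ?M. vinner n u (v i) = 0} \<in> sets ?M" for i
      unfolding sphere_sets sphere_space by measurable
    have Nsets: "N \<in> sets ?M" unfolding N_def using Hsets by auto
    have "emeasure ?M N \<le> (\<Sum>i<n. emeasure ?M {u \<in> space ?M. vinner n u (v i) = 0})"
      unfolding N_def by (intro emeasure_subadditive_finite) (auto simp: Hsets)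
    also have "\<dots> = 0" using Nnull by simp
    finally have "emeasure ?M N = 0" by simp
    hence mN: "measure ?M N = 0" by (simp add: measure_def)
    have Esets: "?E \<in> sets ?M" unfolding sphere_sets sphere_space by (rule event_meas)
    have sub: "space ?M - N \<subseteq> ?E"
    proof
      fix u assume u: "u \<in> space ?M - N"
      hence "\<forall>i<n. vinner n u (v i) \<noteq> 0" unfolding N_def by auto
      thus "u \<in> ?E" using u rounding[OF inst g g1 st opt gr] by auto
    qed
    have m1: "measure ?M (space ?M - N) = 1"
      using P.prob_compl[OF Nsets] mN by simp
    have "measure ?M (space ?M - N) \<le> measure ?M ?E"
      using sub Esets by (intro P.finite_measure_mono) auto
    thus ?thesis using False m1 by simp
  qed
qed


end
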